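(* Let $A$ be a sesquiad and $\mathfrak a\subset A$ a subset. Then there is an ideal $I$ of the ring $R_A$ with $\mathfrak a=I\cap A$ (with $A$ identified with its image in $R_A$) if and only if (i) $\mathfrak a$ is closed under addition, i.e. whenever $s\in\mathfrak a^n$, $k\in\mathbb Z^n$ and $\sum_jk_js_j$ is defined in $A$, it lies in $\mathfrak a$; and (ii) $\mathfrak a A\subset\mathfrak a$.
   Context: All rings are commutative with $1$. A monoid is a commutative multiplicative monoid with $1$ and a zero $0$. A sesquiad is a monoid $A$ with partially defined integer linear combinations $\sum_jk_ja_j$ ($k\in\mathbb Z^n$, $n\ge2$), defined exactly when, for some injective monoid morphism $\varphi:A\to R$ into a ring with $\varphi(0)=0$, $\sum_jk_j\varphi(a_j)\in\varphi(A)$, and then equal to the preimage of that element. The universal ring $R_A=\mathbb ZA/I(A)$, where $I(A)$ is generated by all $\sum_jk_ja_j-(\text{their value in }A)$ for defined sums; $A$ injects into $R_A$. *)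

theory Defs
  imports "HOL-Algebra.QuotRing"
begin

text \<open>Raw sesquiad data: a carrier set, the monoid operations (multiplication,
unit 1, zero 0) and the partial integer linear combinations.
s_sum S n k a is the value of the sum over j<n of k_j a_j if defined, None otherwise.\<close>

record 'a sesquiad =
  s_carrier :: "'a set"
  s_mult :: "'a \<Rightarrow> 'a \<Rightarrow> 'a"
  s_one :: 'a
  s_zero :: 'a
  s_sum :: "nat \<Rightarrow> (nat \<Rightarrow> int) \<Rightarrow> (nat \<Rightarrow> 'a) \<Rightarrow> 'a option"

definition comm_monoid_zero :: "'a sesquiad \<Rightarrow> bool" where
  "comm_monoid_zero S \<longleftrightarrow>
     s_one S \<in> s_carrier S \<and> s_zero S \<in> s_carrier S \<and>
     (\<forall>x\<in>s_carrier S. \<forall>y\<in>s_carrier S. s_mult S x y \<in> s_carrier S) \<and>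
     (\<forall>x\<in>s_carrier S. \<forall>y\<in>s_carrier S. \<forall>z\<in>s_carrier S.
        s_mult S (s_mult S x y) z = s_mult S x (s_mult S y z)) \<and>
     (\<forall>x\<in>s_carrier S. \<forall>y\<in>s_carrier S. s_mult S x y = s_mult S y x) \<and>
     (\<forall>x\<in>s_carrier S. s_mult S (s_one S) x = x) \<and>
     (\<forall>x\<in>s_carrier S. s_mult S (s_zero S) x = s_zero S)"

text \<open>S is a sesquiad, witnessed by the injective monoid morphism phi into the
commutative ring 'r with phi(0)=0: for n \<ge> 2 the sum of k_j a_j is defined iff the sum of
k_j phi(a_j) lies in phi(A), and then its value is the preimage.\<close>
definition sesquiad_via :: "'a sesquiad \<Rightarrow> ('a \<Rightarrow> 'r::comm_ring_1) \<Rightarrow> bool" where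
  "sesquiad_via S \<phi> \<longleftrightarrow>
     comm_monoid_zero S \<and>
     inj_on \<phi> (s_carrier S) \<and>
     \<phi> (s_one S) = 1 \<and> \<phi> (s_zero S) = 0 \<and>
     (\<forall>x\<in>s_carrier S. \<forall>y\<in>s_carrier S. \<phi> (s_mult S x y) = \<phi> x * \<phi> y) \<and>
     (\<forall>n k a. 2 \<le> n \<longrightarrow> (\<forall>j<n. a j \<in> s_carrier S) \<longrightarrow>
        (case s_sum S n k a of
           None \<Rightarrow> (\<Sum>j<n. of_int (k j) * \<phi> (a j)) \<notin> \<phi> ` s_carrier S
         | Some b \<Rightarrow> b \<in> s_carrier S \<and> \<phi> b = (\<Sum>j<n. of_int (k j) * \<phi> (a j))))"

definition monoid_ring :: "'a sesquiad \<Rightarrow> ('a \<Rightarrow> int) ring" where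
  "monoid_ring S = \<lparr>
     carrier = {f. finite {x. f x \<noteq> 0} \<and> (\<forall>x. x \<notin> s_carrier S \<longrightarrow> f x = 0)},
     mult = (\<lambda>f g c. \<Sum>p\<in>{(x, y). f x \<noteq> 0 \<and> g y \<noteq> 0 \<and> s_mult S x y = c}.
                         f (fst p) * g (snd p)),
     one = (\<lambda>x. if x = s_one S then 1 else 0),
     zero = (\<lambda>x. 0),
     add = (\<lambda>f g x. f x + g x) \<rparr>"

definition basis_elt :: "'a \<Rightarrow> 'a \<Rightarrow> int" where
  "basis_elt a = (\<lambda>x. if x = a then 1 else 0)"

definition sum_relations :: "'a sesquiad \<Rightarrow> ('a \<Rightarrow> int) set" where
  "sum_relations S = {(\<lambda>x. (\<Sum>j<n. if a j = x then k j else 0) - basis_elt b x) | n k a b.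
      2 \<le> n \<and> (\<forall>j<n. a j \<in> s_carrier S) \<and> s_sum S n k a = Some b}"

definition rel_ideal :: "'a sesquiad \<Rightarrow> ('a \<Rightarrow> int) set" where
  "rel_ideal S = genideal (monoid_ring S) (sum_relations S)"

definition universal_ring :: "'a sesquiad \<Rightarrow> ('a \<Rightarrow> int) set ring" where
  "universal_ring S = monoid_ring S Quot rel_ideal S"

definition univ_map :: "'a sesquiad \<Rightarrow> 'a \<Rightarrow> ('a \<Rightarrow> int) set" where
  "univ_map S a = a_r_coset (monoid_ring S) (rel_ideal S) (basis_elt a)"

definition closed_under_sums :: "'a sesquiad \<Rightarrow> 'a set \<Rightarrow> bool" where
  "closed_under_sums S \<aa> \<longleftrightarrow>
     (\<forall>n k s b. 2 \<le> n \<longrightarrow> (\<forall>j<n. s j \<in> \<aa>) \<longrightarrow> s_sum S n k s = Some b \<longrightarrow> b \<in> \<aa>)"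

end

theory Submission
  imports Defs
begin

definition supp :: "('a \<Rightarrow> int) \<Rightarrow> 'a set" where "supp f = {x. f x \<noteq> 0}"

lemma ZA_carrier: "f \<in> carrier (monoid_ring S) \<longleftrightarrow> finite (supp f) \<and> (\<forall>x. x \<notin> s_carrier S \<longrightarrow> f x = 0)"
  by (simp add: monoid_ring_def supp_def)

lemma ZA_add[simp]: "f \<oplus>\<^bsub>monoid_ring S\<^esub> g = (\<lambda>x. f x + g x)"
  by (simp add: monoid_ring_def)
lemma ZA_zero[simp]: "\<zero>\<^bsub>monoid_ring S\<^esub> = (\<lambda>x. 0)"
  by (simp add: monoid_ring_def)
lemma ZA_one: "\<one>\<^bsub>monoid_ring S\<^esub> = (\<lambda>x. if x = s_one S then 1 else 0)"
  by (simp add: monoid_ring_def)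
lemma ZA_mult: "f \<otimes>\<^bsub>monoid_ring S\<^esub> g = (\<lambda>c. \<Sum>p\<in>{(x, y). f x \<noteq> 0 \<and> g y \<noteq> 0 \<and> s_mult S x y = c}.
                         f (fst p) * g (snd p))"
  by (simp add: monoid_ring_def)

lemma conv_eq:
  assumes "finite F" "supp f \<subseteq> F" "finite G" "supp g \<subseteq> G"
  shows "(\<Sum>p\<in>{(x, y). f x \<noteq> 0 \<and> g y \<noteq> 0 \<and> M x y = c}. f (fst p) * g (snd p))
     = (\<Sum>x\<in>F. \<Sum>y\<in>G. if M x y = c then f x * g y else (0::int))"
proof -
  have "(\<Sum>x\<in>F. \<Sum>y\<in>G. if M x y = c then f x * g y else (0::int))
     = (\<Sum>p\<in>F\<times>G. if M (fst p) (snd p) = c then f (fst p) * g (snd p) else 0)"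
    by (simp add: sum.cartesian_product split_def)
  also have "\<dots> = (\<Sum>p\<in>{(x, y). f x \<noteq> 0 \<and> g y \<noteq> 0 \<and> M x y = c}. f (fst p) * g (snd p))"
  proof (rule sum.mono_neutral_cong_right)
    show "finite (F \<times> G)" using assms by simp
    show "{(x, y). f x \<noteq> 0 \<and> g y \<noteq> 0 \<and> M x y = c} \<subseteq> F \<times> G" using assms by (auto simp: supp_def)
    show "\<forall>p\<in>F \<times> G - {(x, y). f x \<noteq> 0 \<and> g y \<noteq> 0 \<and> M x y = c}.
       (if M (fst p) (snd p) = c then f (fst p) * g (snd p) else 0) = 0"
      by (auto simp add: case_prod_beta)
    show "\<And>p. p \<in> {(x, y). f x \<noteq> 0 \<and> g y \<noteq> 0 \<and> M x y = c} \<Longrightarrow>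
       (if M (fst p) (snd p) = c then f (fst p) * g (snd p) else 0) = f (fst p) * g (snd p)"
      by (simp add: case_prod_beta)
  qed
  finally show ?thesis by (rule sym)
qed

lemma ZA_mult_eq:
  assumes "finite F" "supp f \<subseteq> F" "finite G" "supp g \<subseteq> G"
  shows "(f \<otimes>\<^bsub>monoid_ring S\<^esub> g) c = (\<Sum>x\<in>F. \<Sum>y\<in>G. if s_mult S x y = c then f x * g y else 0)"
  using conv_eq[OF assms, where M="s_mult S"] by (simp only: ZA_mult)

lemma sum_nonzero_ex: "(\<Sum>x\<in>A. h x) \<noteq> (0::'b::comm_monoid_add) \<Longrightarrow> \<exists>x\<in>A. h x \<noteq> 0"
  using sum.neutral[of A h] by blast


lemma ZA_mult_supp:
  assumes "finite (supp f)" "finite (supp g)"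
  shows "supp (f \<otimes>\<^bsub>monoid_ring S\<^esub> g) \<subseteq> (\<lambda>(x,y). s_mult S x y) ` (supp f \<times> supp g)"
proof
  fix c assume "c \<in> supp (f \<otimes>\<^bsub>monoid_ring S\<^esub> g)"
  hence "(\<Sum>x\<in>supp f. \<Sum>y\<in>supp g. if s_mult S x y = c then f x * g y else 0) \<noteq> 0"
    using ZA_mult_eq[of "supp f" f "supp g" g S c] assms by (simp add: supp_def)
  then obtain x where x: "x \<in> supp f" "(\<Sum>y\<in>supp g. if s_mult S x y = c then f x * g y else 0) \<noteq> 0"
    using sum_nonzero_ex by blast
  then obtain y where y: "y \<in> supp g" "(if s_mult S x y = c then f x * g y else 0) \<noteq> 0"
    using sum_nonzero_ex by blast
  from x y show "c \<in> (\<lambda>(x,y). s_mult S x y) ` (supp f \<times> supp g)"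
    by (auto split: if_splits)
qed

lemma supp_sub: "f \<in> carrier (monoid_ring S) \<Longrightarrow> supp f \<subseteq> s_carrier S"
  by (auto simp: ZA_carrier supp_def)

lemma fin_supp: "f \<in> carrier (monoid_ring S) \<Longrightarrow> finite (supp f)"
  by (auto simp: ZA_carrier)

context
  fixes S :: "'a sesquiad"
  assumes M: "comm_monoid_zero S"
begin

abbreviation "m \<equiv> s_mult S"

lemma m_closed: "x \<in> s_carrier S \<Longrightarrow> y \<in> s_carrier S \<Longrightarrow> m x y \<in> s_carrier S"
  using M unfolding comm_monoid_zero_def by blast
lemma m_assoc: "x \<in> s_carrier S \<Longrightarrow> y \<in> s_carrier S \<Longrightarrow> z \<in> s_carrier S \<Longrightarrow> m (m x y) z = m x (m y z)"
  using M unfolding comm_monoid_zero_def by blast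
lemma m_comm: "x \<in> s_carrier S \<Longrightarrow> y \<in> s_carrier S \<Longrightarrow> m x y = m y x"
  using M unfolding comm_monoid_zero_def by blast
lemma m_one: "x \<in> s_carrier S \<Longrightarrow> m (s_one S) x = x"
  using M unfolding comm_monoid_zero_def by blast
lemma one_in: "s_one S \<in> s_carrier S"
  using M unfolding comm_monoid_zero_def by blast

lemma ZA_m_closed:
  assumes f: "f \<in> carrier (monoid_ring S)" and g: "g \<in> carrier (monoid_ring S)"
  shows "f \<otimes>\<^bsub>monoid_ring S\<^esub> g \<in> carrier (monoid_ring S)"
proof -
  have sub: "supp (f \<otimes>\<^bsub>monoid_ring S\<^esub> g) \<subseteq> (\<lambda>(x,y). m x y) ` (supp f \<times> supp g)"
    using ZA_mult_supp fin_supp f g by blast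
  have "finite (supp (f \<otimes>\<^bsub>monoid_ring S\<^esub> g))"
    by (rule finite_subset[OF sub]) (intro finite_imageI finite_cartesian_product fin_supp[OF f] fin_supp[OF g])
  moreover have "(f \<otimes>\<^bsub>monoid_ring S\<^esub> g) x = 0" if "x \<notin> s_carrier S" for x
  proof (rule ccontr)
    assume "(f \<otimes>\<^bsub>monoid_ring S\<^esub> g) x \<noteq> 0"
    hence "x \<in> (\<lambda>(x,y). m x y) ` (supp f \<times> supp g)" using sub by (auto simp: supp_def)
    then obtain a b where "a \<in> supp f" "b \<in> supp g" "x = m a b" by auto
    thus False using that supp_sub[OF f] supp_sub[OF g] m_closed by blast
  qed
  ultimately show ?thesis by (simp add: ZA_carrier)
qed

lemma swap4:
  "(\<Sum>u\<in>U. \<Sum>z\<in>H. \<Sum>x\<in>F. \<Sum>y\<in>G. T u z x y) = (\<Sum>x\<in>F. \<Sum>y\<in>G. \<Sum>z\<in>H. \<Sum>u\<in>U. (T u z x y :: int))"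
proof -
  have "(\<Sum>u\<in>U. \<Sum>z\<in>H. \<Sum>x\<in>F. \<Sum>y\<in>G. T u z x y) = (\<Sum>u\<in>U. \<Sum>x\<in>F. \<Sum>z\<in>H. \<Sum>y\<in>G. T u z x y)"
    by (rule sum.cong[OF refl], rule sum.swap)
  also have "\<dots> = (\<Sum>u\<in>U. \<Sum>x\<in>F. \<Sum>y\<in>G. \<Sum>z\<in>H. T u z x y)"
    by (rule sum.cong[OF refl], rule sum.cong[OF refl], rule sum.swap)
  also have "\<dots> = (\<Sum>x\<in>F. \<Sum>u\<in>U. \<Sum>y\<in>G. \<Sum>z\<in>H. T u z x y)"
    by (rule sum.swap)
  also have "\<dots> = (\<Sum>x\<in>F. \<Sum>y\<in>G. \<Sum>u\<in>U. \<Sum>z\<in>H. T u z x y)"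
    by (rule sum.cong[OF refl], rule sum.swap)
  also have "\<dots> = (\<Sum>x\<in>F. \<Sum>y\<in>G. \<Sum>z\<in>H. \<Sum>u\<in>U. T u z x y)"
    by (rule sum.cong[OF refl], rule sum.cong[OF refl], rule sum.swap)
  finally show ?thesis .
qed

lemma swap3:
  "(\<Sum>v\<in>V. \<Sum>y\<in>G. \<Sum>z\<in>H. T v y z) = (\<Sum>y\<in>G. \<Sum>z\<in>H. \<Sum>v\<in>V. (T v y z :: int))"
proof -
  have "(\<Sum>v\<in>V. \<Sum>y\<in>G. \<Sum>z\<in>H. T v y z) = (\<Sum>y\<in>G. \<Sum>v\<in>V. \<Sum>z\<in>H. T v y z)"
    by (rule sum.swap)
  also have "\<dots> = (\<Sum>y\<in>G. \<Sum>z\<in>H. \<Sum>v\<in>V. T v y z)"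
    by (rule sum.cong[OF refl], rule sum.swap)
  finally show ?thesis .
qed

lemma delta_sum:
  assumes "finite U" "w \<in> U"
  shows "(\<Sum>u\<in>U. if w = u \<and> P u then (V::int) else 0) = (if P w then V else 0)"
proof -
  have "(\<Sum>u\<in>U. if w = u \<and> P u then (V::int) else 0) = (\<Sum>u\<in>U. if u = w then (if P w then V else 0) else 0)"
    by (rule sum.cong) auto
  also have "\<dots> = (if P w then V else 0)" using assms by (simp add: sum.delta)
  finally show ?thesis .
qed

lemma ZA_assoc_left:
  assumes f: "f \<in> carrier (monoid_ring S)" and g: "g \<in> carrier (monoid_ring S)" and h: "h \<in> carrier (monoid_ring S)"
  shows "((f \<otimes>\<^bsub>monoid_ring S\<^esub> g) \<otimes>\<^bsub>monoid_ring S\<^esub> h) d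
    = (\<Sum>x\<in>supp f. \<Sum>y\<in>supp g. \<Sum>z\<in>supp h. if m (m x y) z = d then f x * g y * h z else 0)"
proof -
  let ?U = "(\<lambda>(x,y). m x y) ` (supp f \<times> supp g)"
  have fU: "finite ?U" by (intro finite_imageI finite_cartesian_product fin_supp[OF f] fin_supp[OF g])
  have sU: "supp (f \<otimes>\<^bsub>monoid_ring S\<^esub> g) \<subseteq> ?U"
    using ZA_mult_supp fin_supp f g by blast
  have "((f \<otimes>\<^bsub>monoid_ring S\<^esub> g) \<otimes>\<^bsub>monoid_ring S\<^esub> h) d
     = (\<Sum>u\<in>?U. \<Sum>z\<in>supp h. if m u z = d then (f \<otimes>\<^bsub>monoid_ring S\<^esub> g) u * h z else 0)"
    by (rule ZA_mult_eq[OF fU sU fin_supp[OF h] subset_refl])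
  also have "\<dots> = (\<Sum>u\<in>?U. \<Sum>z\<in>supp h. \<Sum>x\<in>supp f. \<Sum>y\<in>supp g.
      if m x y = u \<and> m u z = d then f x * g y * h z else 0)"
  proof (intro sum.cong refl)
    fix u z
    have e: "(f \<otimes>\<^bsub>monoid_ring S\<^esub> g) u = (\<Sum>x\<in>supp f. \<Sum>y\<in>supp g. if m x y = u then f x * g y else 0)"
      by (rule ZA_mult_eq[OF fin_supp[OF f] subset_refl fin_supp[OF g] subset_refl])
    show "(if m u z = d then (f \<otimes>\<^bsub>monoid_ring S\<^esub> g) u * h z else 0) = (\<Sum>x\<in>supp f. \<Sum>y\<in>supp g.
      if m x y = u \<and> m u z = d then f x * g y * h z else 0)"
      unfolding e by (cases "m u z = d") (auto simp: sum_distrib_right intro!: sum.cong)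
  qed
  also have "\<dots> = (\<Sum>x\<in>supp f. \<Sum>y\<in>supp g. \<Sum>z\<in>supp h. \<Sum>u\<in>?U.
      if m x y = u \<and> m u z = d then f x * g y * h z else 0)"
    by (rule swap4)
  also have "\<dots> = (\<Sum>x\<in>supp f. \<Sum>y\<in>supp g. \<Sum>z\<in>supp h. if m (m x y) z = d then f x * g y * h z else 0)"
  proof (intro sum.cong refl)
    fix x y z assume "x \<in> supp f" "y \<in> supp g"
    hence "m x y \<in> ?U" by auto
    thus "(\<Sum>u\<in>?U. if m x y = u \<and> m u z = d then f x * g y * h z else 0) = (if m (m x y) z = d then f x * g y * h z else 0)"
      using delta_sum[OF fU, of "m x y" "\<lambda>u. m u z = d"] by simp
  qed
  finally show ?thesis .
qed

lemma ZA_assoc_right: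
  assumes f: "f \<in> carrier (monoid_ring S)" and g: "g \<in> carrier (monoid_ring S)" and h: "h \<in> carrier (monoid_ring S)"
  shows "(f \<otimes>\<^bsub>monoid_ring S\<^esub> (g \<otimes>\<^bsub>monoid_ring S\<^esub> h)) d
    = (\<Sum>x\<in>supp f. \<Sum>y\<in>supp g. \<Sum>z\<in>supp h. if m x (m y z) = d then f x * g y * h z else 0)"
proof -
  let ?V = "(\<lambda>(x,y). m x y) ` (supp g \<times> supp h)"
  have fV: "finite ?V" by (intro finite_imageI finite_cartesian_product fin_supp[OF g] fin_supp[OF h])
  have sV: "supp (g \<otimes>\<^bsub>monoid_ring S\<^esub> h) \<subseteq> ?V"
    using ZA_mult_supp fin_supp g h by blast
  have "(f \<otimes>\<^bsub>monoid_ring S\<^esub> (g \<otimes>\<^bsub>monoid_ring S\<^esub> h)) d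
     = (\<Sum>x\<in>supp f. \<Sum>v\<in>?V. if m x v = d then f x * (g \<otimes>\<^bsub>monoid_ring S\<^esub> h) v else 0)"
    by (rule ZA_mult_eq[OF fin_supp[OF f] subset_refl fV sV])
  also have "\<dots> = (\<Sum>x\<in>supp f. \<Sum>v\<in>?V. \<Sum>y\<in>supp g. \<Sum>z\<in>supp h.
      if m y z = v \<and> m x v = d then f x * g y * h z else 0)"
  proof (intro sum.cong refl)
    fix x v
    have e: "(g \<otimes>\<^bsub>monoid_ring S\<^esub> h) v = (\<Sum>y\<in>supp g. \<Sum>z\<in>supp h. if m y z = v then g y * h z else 0)"
      by (rule ZA_mult_eq[OF fin_supp[OF g] subset_refl fin_supp[OF h] subset_refl])
    show "(if m x v = d then f x * (g \<otimes>\<^bsub>monoid_ring S\<^esub> h) v else 0) = (\<Sum>y\<in>supp g. \<Sum>z\<in>supp h.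
      if m y z = v \<and> m x v = d then f x * g y * h z else 0)"
      unfolding e by (cases "m x v = d") (auto simp: sum_distrib_left mult.assoc intro!: sum.cong)
  qed
  also have "\<dots> = (\<Sum>x\<in>supp f. \<Sum>y\<in>supp g. \<Sum>z\<in>supp h. \<Sum>v\<in>?V.
      if m y z = v \<and> m x v = d then f x * g y * h z else 0)"
    by (rule sum.cong[OF refl], rule swap3)
  also have "\<dots> = (\<Sum>x\<in>supp f. \<Sum>y\<in>supp g. \<Sum>z\<in>supp h. if m x (m y z) = d then f x * g y * h z else 0)"
  proof (intro sum.cong refl)
    fix x y z assume "y \<in> supp g" "z \<in> supp h"
    hence "m y z \<in> ?V" by auto
    thus "(\<Sum>v\<in>?V. if m y z = v \<and> m x v = d then f x * g y * h z else 0) = (if m x (m y z) = d then f x * g y * h z else 0)"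
      using delta_sum[OF fV, of "m y z" "\<lambda>v. m x v = d"] by simp
  qed
  finally show ?thesis .
qed


lemma ZA_assoc:
  assumes f: "f \<in> carrier (monoid_ring S)" and g: "g \<in> carrier (monoid_ring S)" and h: "h \<in> carrier (monoid_ring S)"
  shows "(f \<otimes>\<^bsub>monoid_ring S\<^esub> g) \<otimes>\<^bsub>monoid_ring S\<^esub> h = f \<otimes>\<^bsub>monoid_ring S\<^esub> (g \<otimes>\<^bsub>monoid_ring S\<^esub> h)"
proof
  fix d
  show "((f \<otimes>\<^bsub>monoid_ring S\<^esub> g) \<otimes>\<^bsub>monoid_ring S\<^esub> h) d = (f \<otimes>\<^bsub>monoid_ring S\<^esub> (g \<otimes>\<^bsub>monoid_ring S\<^esub> h)) d"
    unfolding ZA_assoc_left[OF f g h] ZA_assoc_right[OF f g h]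
  proof (intro sum.cong refl)
    fix x y z assume "x \<in> supp f" "y \<in> supp g" "z \<in> supp h"
    hence "m (m x y) z = m x (m y z)" using supp_sub[OF f] supp_sub[OF g] supp_sub[OF h] m_assoc by blast
    thus "(if m (m x y) z = d then f x * g y * h z else 0) = (if m x (m y z) = d then f x * g y * h z else 0)"
      by simp
  qed
qed

lemma ZA_comm:
  assumes f: "f \<in> carrier (monoid_ring S)" and g: "g \<in> carrier (monoid_ring S)"
  shows "f \<otimes>\<^bsub>monoid_ring S\<^esub> g = g \<otimes>\<^bsub>monoid_ring S\<^esub> f"
proof
  fix c
  have "(f \<otimes>\<^bsub>monoid_ring S\<^esub> g) c = (\<Sum>x\<in>supp f. \<Sum>y\<in>supp g. if m x y = c then f x * g y else 0)"
    by (rule ZA_mult_eq[OF fin_supp[OF f] subset_refl fin_supp[OF g] subset_refl])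
  also have "\<dots> = (\<Sum>y\<in>supp g. \<Sum>x\<in>supp f. if m x y = c then f x * g y else 0)"
    by (rule sum.swap)
  also have "\<dots> = (\<Sum>y\<in>supp g. \<Sum>x\<in>supp f. if m y x = c then g y * f x else 0)"
  proof (intro sum.cong refl)
    fix x y assume "x \<in> supp f" "y \<in> supp g"
    hence "m x y = m y x" using supp_sub[OF f] supp_sub[OF g] m_comm by blast
    thus "(if m x y = c then f x * g y else 0) = (if m y x = c then g y * f x else 0)" by simp
  qed
  also have "\<dots> = (g \<otimes>\<^bsub>monoid_ring S\<^esub> f) c"
    by (rule ZA_mult_eq[OF fin_supp[OF g] subset_refl fin_supp[OF f] subset_refl, symmetric])
  finally show "(f \<otimes>\<^bsub>monoid_ring S\<^esub> g) c = (g \<otimes>\<^bsub>monoid_ring S\<^esub> f) c" .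
qed

lemma ZA_one_carrier: "\<one>\<^bsub>monoid_ring S\<^esub> \<in> carrier (monoid_ring S)"
proof -
  have "supp (\<one>\<^bsub>monoid_ring S\<^esub>) \<subseteq> {s_one S}" by (auto simp: ZA_one supp_def)
  hence "finite (supp (\<one>\<^bsub>monoid_ring S\<^esub>))" by (rule finite_subset) simp
  thus ?thesis using one_in by (auto simp: ZA_carrier ZA_one)
qed

lemma ZA_l_one:
  assumes f: "f \<in> carrier (monoid_ring S)"
  shows "\<one>\<^bsub>monoid_ring S\<^esub> \<otimes>\<^bsub>monoid_ring S\<^esub> f = f"
proof
  fix c
  have s1: "supp (\<one>\<^bsub>monoid_ring S\<^esub>) \<subseteq> {s_one S}" by (auto simp: ZA_one supp_def)
  have "(\<one>\<^bsub>monoid_ring S\<^esub> \<otimes>\<^bsub>monoid_ring S\<^esub> f) c = (\<Sum>x\<in>{s_one S}. \<Sum>y\<in>supp f. if m x y = c then \<one>\<^bsub>monoid_ring S\<^esub> x * f y else 0)"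
    by (rule ZA_mult_eq[OF _ s1 fin_supp[OF f] subset_refl]) simp
  also have "\<dots> = (\<Sum>y\<in>supp f. if y = c then f y else 0)"
  proof -
    have "\<And>y. y \<in> supp f \<Longrightarrow> m (s_one S) y = y" using supp_sub[OF f] m_one by blast
    moreover have "\<one>\<^bsub>monoid_ring S\<^esub> (s_one S) = 1" by (simp add: ZA_one)
    ultimately show ?thesis by (simp cong: sum.cong if_cong)
  qed
  also have "\<dots> = f c" using fin_supp[OF f] by (simp add: sum.delta' supp_def)
  finally show "(\<one>\<^bsub>monoid_ring S\<^esub> \<otimes>\<^bsub>monoid_ring S\<^esub> f) c = f c" .
qed

lemma ZA_add_closed:
  assumes f: "f \<in> carrier (monoid_ring S)" and g: "g \<in> carrier (monoid_ring S)"
  shows "(\<lambda>x. f x + g x) \<in> carrier (monoid_ring S)"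
proof -
  have "supp (\<lambda>x. f x + g x) \<subseteq> supp f \<union> supp g" by (auto simp: supp_def)
  hence "finite (supp (\<lambda>x. f x + g x))" by (rule finite_subset) (simp add: fin_supp[OF f] fin_supp[OF g])
  thus ?thesis using f g by (simp add: ZA_carrier)
qed

lemma ZA_l_distr:
  assumes f: "f \<in> carrier (monoid_ring S)" and g: "g \<in> carrier (monoid_ring S)" and h: "h \<in> carrier (monoid_ring S)"
  shows "(f \<oplus>\<^bsub>monoid_ring S\<^esub> g) \<otimes>\<^bsub>monoid_ring S\<^esub> h = f \<otimes>\<^bsub>monoid_ring S\<^esub> h \<oplus>\<^bsub>monoid_ring S\<^esub> g \<otimes>\<^bsub>monoid_ring S\<^esub> h"
proof
  fix c
  let ?F = "supp f \<union> supp g"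
  have fF: "finite ?F" using fin_supp[OF f] fin_supp[OF g] by simp
  have s: "supp (f \<oplus>\<^bsub>monoid_ring S\<^esub> g) \<subseteq> ?F" by (auto simp: supp_def)
  have "((f \<oplus>\<^bsub>monoid_ring S\<^esub> g) \<otimes>\<^bsub>monoid_ring S\<^esub> h) c = (\<Sum>x\<in>?F. \<Sum>y\<in>supp h. if m x y = c then (f \<oplus>\<^bsub>monoid_ring S\<^esub> g) x * h y else 0)"
    by (rule ZA_mult_eq[OF fF s fin_supp[OF h] subset_refl])
  also have "\<dots> = (\<Sum>x\<in>?F. \<Sum>y\<in>supp h. if m x y = c then (f x + g x) * h y else 0)"
    by (simp cong: if_cong)
  also have "\<dots> = (\<Sum>x\<in>?F. \<Sum>y\<in>supp h. if m x y = c then f x * h y else 0) + (\<Sum>x\<in>?F. \<Sum>y\<in>supp h. if m x y = c then g x * h y else 0)"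
    by (simp add: sum.distrib[symmetric] distrib_right if_distrib cong: if_cong)
  also have "\<dots> = (f \<otimes>\<^bsub>monoid_ring S\<^esub> h) c + (g \<otimes>\<^bsub>monoid_ring S\<^esub> h) c"
  proof -
    have sf: "supp f \<subseteq> ?F" and sg: "supp g \<subseteq> ?F" by auto
    show ?thesis
      using ZA_mult_eq[OF fF sf fin_supp[OF h] subset_refl, of S c] ZA_mult_eq[OF fF sg fin_supp[OF h] subset_refl, of S c]
      by simp
  qed
  finally show "((f \<oplus>\<^bsub>monoid_ring S\<^esub> g) \<otimes>\<^bsub>monoid_ring S\<^esub> h) c = (f \<otimes>\<^bsub>monoid_ring S\<^esub> h \<oplus>\<^bsub>monoid_ring S\<^esub> g \<otimes>\<^bsub>monoid_ring S\<^esub> h) c"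
    by simp
qed

lemma ZA_cring: "cring (monoid_ring S)"
proof (rule cringI)
  show "abelian_group (monoid_ring S)"
  proof (rule abelian_groupI)
    show "\<zero>\<^bsub>monoid_ring S\<^esub> \<in> carrier (monoid_ring S)" by (simp add: ZA_carrier supp_def)
    fix x assume x: "x \<in> carrier (monoid_ring S)"
    show "\<exists>y\<in>carrier (monoid_ring S). y \<oplus>\<^bsub>monoid_ring S\<^esub> x = \<zero>\<^bsub>monoid_ring S\<^esub>"
    proof (intro bexI)
      show "(\<lambda>a. - x a) \<in> carrier (monoid_ring S)" using x by (simp add: ZA_carrier supp_def)
    qed simp
  qed (auto simp: ZA_add_closed)
  show "comm_monoid (monoid_ring S)"
    by (rule comm_monoidI) (erule (1) ZA_m_closed, rule ZA_one_carrier, erule (2) ZA_assoc, erule ZA_l_one, erule (1) ZA_comm)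
qed (rule ZA_l_distr)


lemma ZA_a_inv:
  assumes f: "f \<in> carrier (monoid_ring S)"
  shows "\<ominus>\<^bsub>monoid_ring S\<^esub> f = (\<lambda>x. - f x)"
proof -
  interpret R: cring "monoid_ring S" by (rule ZA_cring)
  have c: "(\<lambda>x. - f x) \<in> carrier (monoid_ring S)" using f by (simp add: ZA_carrier supp_def)
  show ?thesis by (rule R.minus_equality[OF _ f c]) simp
qed

lemma basis_carrier: "a \<in> s_carrier S \<Longrightarrow> basis_elt a \<in> carrier (monoid_ring S)"
proof -
  assume a: "a \<in> s_carrier S"
  have "supp (basis_elt a) \<subseteq> {a}" by (auto simp: supp_def basis_elt_def)
  hence "finite (supp (basis_elt a))" by (rule finite_subset) simp
  thus ?thesis using a by (auto simp: ZA_carrier basis_elt_def)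
qed

lemma single_mult:
  "(\<lambda>x. if x = a then p else 0) \<otimes>\<^bsub>monoid_ring S\<^esub> (\<lambda>x. if x = b then q else 0)
    = (\<lambda>x. if x = m a b then p * q else 0)"
proof
  fix c
  have "((\<lambda>x. if x = a then p else 0) \<otimes>\<^bsub>monoid_ring S\<^esub> (\<lambda>x. if x = b then q else 0)) c
    = (\<Sum>x\<in>{a}. \<Sum>y\<in>{b}. if m x y = c then (if x = a then p else 0) * (if y = b then q else 0) else 0)"
    by (rule ZA_mult_eq) (auto simp: supp_def)
  thus "((\<lambda>x. if x = a then p else 0) \<otimes>\<^bsub>monoid_ring S\<^esub> (\<lambda>x. if x = b then q else 0)) c = (if c = m a b then p * q else 0)"
    by auto
qed

lemma basis_mult: "basis_elt a \<otimes>\<^bsub>monoid_ring S\<^esub> basis_elt b = basis_elt (m a b)"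
  using single_mult[of a 1 b 1] by (simp add: basis_elt_def cong: if_cong)

lemma sc_mult_basis: "(\<lambda>x. if x = s_one S then k else 0) \<otimes>\<^bsub>monoid_ring S\<^esub> basis_elt b = (\<lambda>x. if x = b then k else 0)"
  if "b \<in> s_carrier S"
  using single_mult[of "s_one S" k b 1] m_one[OF that] by (simp add: basis_elt_def cong: if_cong)

lemma sc_carrier: "(\<lambda>x. if x = s_one S then k else 0) \<in> carrier (monoid_ring S)"
proof -
  have "supp (\<lambda>x. if x = s_one S then k else 0) \<subseteq> {s_one S}" by (auto simp: supp_def)
  hence "finite (supp (\<lambda>x. if x = s_one S then k else (0::int)))" by (rule finite_subset) simp
  thus ?thesis using one_in by (auto simp: ZA_carrier)
qed

end

definition Hs :: "nat \<Rightarrow> (nat \<Rightarrow> int) \<Rightarrow> (nat \<Rightarrow> 'a) \<Rightarrow> 'a \<Rightarrow> int" where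
  "Hs n k a = (\<lambda>x. \<Sum>j<n. if a j = x then k j else 0)"

lemma Hs_0: "Hs 0 k a = (\<lambda>x. 0)" by (simp add: Hs_def)
lemma Hs_Suc: "Hs (Suc n) k a = (\<lambda>x. Hs n k a x + (if x = a n then k n else 0))"
  by (auto simp: Hs_def)

lemma supp_Hs: "supp (Hs n k a) \<subseteq> a ` {..<n}"
proof
  fix x assume "x \<in> supp (Hs n k a)"
  hence "(\<Sum>j<n. if a j = x then k j else 0) \<noteq> 0" by (simp add: supp_def Hs_def)
  then obtain j where "j < n" "(if a j = x then k j else 0) \<noteq> 0"
    using sum_nonzero_ex[of "\<lambda>j. if a j = x then k j else 0" "{..<n}"] by auto
  thus "x \<in> a ` {..<n}" by (auto split: if_splits)
qed


definition psi :: "('a \<Rightarrow> 'r::comm_ring_1) \<Rightarrow> ('a \<Rightarrow> int) \<Rightarrow> 'r" where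
  "psi \<phi> f = (\<Sum>x\<in>supp f. of_int (f x) * \<phi> x)"

lemma psi_eq: "finite F \<Longrightarrow> supp f \<subseteq> F \<Longrightarrow> psi \<phi> f = (\<Sum>x\<in>F. of_int (f x) * \<phi> x)"
  unfolding psi_def by (rule sum.mono_neutral_left) (auto simp: supp_def)

lemma psi_add:
  assumes "finite (supp f)" "finite (supp g)"
  shows "psi \<phi> (\<lambda>x. f x + g x) = psi \<phi> f + psi \<phi> g"
proof -
  let ?F = "supp f \<union> supp g"
  have fF: "finite ?F" using assms by simp
  have "psi \<phi> (\<lambda>x. f x + g x) = (\<Sum>x\<in>?F. of_int (f x + g x) * \<phi> x)"
    by (rule psi_eq[OF fF]) (auto simp: supp_def)
  also have "\<dots> = (\<Sum>x\<in>?F. of_int (f x) * \<phi> x) + (\<Sum>x\<in>?F. of_int (g x) * \<phi> x)"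
    by (simp add: sum.distrib[symmetric] distrib_right)
  also have "\<dots> = psi \<phi> f + psi \<phi> g"
    using psi_eq[OF fF, of f \<phi>] psi_eq[OF fF, of g \<phi>] by auto
  finally show ?thesis .
qed

lemma psi_single: "psi \<phi> (\<lambda>x. if x = a then p else 0) = of_int p * \<phi> a"
proof -
  have "psi \<phi> (\<lambda>x. if x = a then p else 0) = (\<Sum>x\<in>{a}. of_int (if x = a then p else 0) * \<phi> x)"
    by (rule psi_eq) (auto simp: supp_def)
  thus ?thesis by simp
qed

lemma psi_Hs: "psi \<phi> (Hs n k a) = (\<Sum>j<n. of_int (k j) * \<phi> (a j))"
proof (induction n)
  case 0 show ?case by (simp add: Hs_0 psi_def supp_def)
next
  case (Suc n)
  have f1: "finite (supp (Hs n k a))" by (rule finite_subset[OF supp_Hs]) simp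
  have f2: "finite (supp (\<lambda>x. if x = a n then k n else 0))"
    by (rule finite_subset[of _ "{a n}"]) (auto simp: supp_def)
  show ?case unfolding Hs_Suc psi_add[OF f1 f2] psi_single Suc.IH by simp
qed

lemma swap3g:
  "(\<Sum>v\<in>V. \<Sum>y\<in>G. \<Sum>z\<in>H. T v y z) = (\<Sum>y\<in>G. \<Sum>z\<in>H. \<Sum>v\<in>V. (T v y z :: 'b::comm_monoid_add))"
proof -
  have "(\<Sum>v\<in>V. \<Sum>y\<in>G. \<Sum>z\<in>H. T v y z) = (\<Sum>y\<in>G. \<Sum>v\<in>V. \<Sum>z\<in>H. T v y z)"
    by (rule sum.swap)
  also have "\<dots> = (\<Sum>y\<in>G. \<Sum>z\<in>H. \<Sum>v\<in>V. T v y z)"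
    by (rule sum.cong[OF refl], rule sum.swap)
  finally show ?thesis .
qed

context
  fixes S :: "'a sesquiad" and \<phi> :: "'a \<Rightarrow> 'r::comm_ring_1"
  assumes V: "sesquiad_via S \<phi>"
begin

lemma M: "comm_monoid_zero S" using V by (simp add: sesquiad_via_def)

lemma V_sum: "2 \<le> n \<Longrightarrow> (\<forall>j<n. a j \<in> s_carrier S) \<Longrightarrow>
        (case s_sum S n k a of
           None \<Rightarrow> (\<Sum>j<n. of_int (k j) * \<phi> (a j)) \<notin> \<phi> ` s_carrier S
         | Some b \<Rightarrow> b \<in> s_carrier S \<and> \<phi> b = (\<Sum>j<n. of_int (k j) * \<phi> (a j)))"
  using V unfolding sesquiad_via_def by blast

lemma phi_inj: "inj_on \<phi> (s_carrier S)" using V by (simp add: sesquiad_via_def)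
lemma phi_mult: "x \<in> s_carrier S \<Longrightarrow> y \<in> s_carrier S \<Longrightarrow> \<phi> (s_mult S x y) = \<phi> x * \<phi> y"
  using V unfolding sesquiad_via_def by blast

lemma sumrel_carrier: "sum_relations S \<subseteq> carrier (monoid_ring S)"
proof
  fix g assume "g \<in> sum_relations S"
  then obtain n k a b where g: "g = (\<lambda>x. (\<Sum>j<n. if a j = x then k j else 0) - basis_elt b x)"
    and n: "2 \<le> n" and a: "\<forall>j<n. a j \<in> s_carrier S" and b: "s_sum S n k a = Some b"
    unfolding sum_relations_def by blast
  have bA: "b \<in> s_carrier S" using V_sum[OF n a, of k] b by simp
  have g': "g = (\<lambda>x. Hs n k a x - basis_elt b x)" using g by (simp add: Hs_def)
  have "supp g \<subseteq> a ` {..<n} \<union> {b}"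
  proof
    fix x assume "x \<in> supp g"
    hence "Hs n k a x \<noteq> 0 \<or> basis_elt b x \<noteq> 0" by (auto simp: g' supp_def)
    thus "x \<in> a ` {..<n} \<union> {b}" using supp_Hs[of n k a] by (auto simp: supp_def basis_elt_def)
  qed
  hence "finite (supp g)" by (rule finite_subset) simp
  moreover have "g x = 0" if "x \<notin> s_carrier S" for x
  proof -
    have "Hs n k a x = 0" using supp_Hs[of n k a] a that by (auto simp: supp_def)
    moreover have "basis_elt b x = 0" using bA that by (auto simp: basis_elt_def)
    ultimately show ?thesis by (simp add: g')
  qed
  ultimately show "g \<in> carrier (monoid_ring S)" by (simp add: ZA_carrier)
qed

lemma rel_ideal_ideal: "ideal (rel_ideal S) (monoid_ring S)"
proof -
  interpret R: cring "monoid_ring S" by (rule ZA_cring[OF M])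
  show ?thesis unfolding rel_ideal_def by (rule R.genideal_ideal[OF sumrel_carrier])
qed

lemma sumrel_sub: "sum_relations S \<subseteq> rel_ideal S"
proof -
  interpret R: cring "monoid_ring S" by (rule ZA_cring[OF M])
  show ?thesis unfolding rel_ideal_def by (rule R.genideal_self[OF sumrel_carrier])
qed

lemma KL:
  assumes J: "ideal J (monoid_ring S)" and relJ: "rel_ideal S \<subseteq> J"
  shows "closed_under_sums S {a \<in> s_carrier S. basis_elt a \<in> J} \<and>
     (\<forall>x\<in>{a \<in> s_carrier S. basis_elt a \<in> J}. \<forall>y\<in>s_carrier S. s_mult S x y \<in> {a \<in> s_carrier S. basis_elt a \<in> J})"
proof
  interpret R: cring "monoid_ring S" by (rule ZA_cring[OF M])
  interpret J: ideal J "monoid_ring S" by (rule J)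
  show "\<forall>x\<in>{a \<in> s_carrier S. basis_elt a \<in> J}. \<forall>y\<in>s_carrier S. s_mult S x y \<in> {a \<in> s_carrier S. basis_elt a \<in> J}"
  proof (intro ballI)
    fix x y assume x: "x \<in> {a \<in> s_carrier S. basis_elt a \<in> J}" and y: "y \<in> s_carrier S"
    have "basis_elt x \<otimes>\<^bsub>monoid_ring S\<^esub> basis_elt y \<in> J"
      using x basis_carrier[OF M y] by (auto intro: J.I_r_closed)
    hence "basis_elt (s_mult S x y) \<in> J" by (simp add: basis_mult[OF M])
    thus "s_mult S x y \<in> {a \<in> s_carrier S. basis_elt a \<in> J}" using x y m_closed[OF M] by auto
  qed
  show "closed_under_sums S {a \<in> s_carrier S. basis_elt a \<in> J}"
    unfolding closed_under_sums_def
  proof (intro allI impI)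
    fix n k s b assume n: "2 \<le> n" and s: "\<forall>j<n. s j \<in> {a \<in> s_carrier S. basis_elt a \<in> J}"
      and b: "s_sum S n k s = Some b"
    have sA: "\<forall>j<n. s j \<in> s_carrier S" using s by auto
    have bA: "b \<in> s_carrier S" using V_sum[OF n sA, of k] b by simp
    have H: "Hs i k s \<in> J" if "i \<le> n" for i
      using that
    proof (induction i)
      case 0 show ?case using J.zero_closed by (simp add: Hs_0)
    next
      case (Suc i)
      hence i: "i < n" by simp
      have "Hs (Suc i) k s = Hs i k s \<oplus>\<^bsub>monoid_ring S\<^esub>
             ((\<lambda>x. if x = s_one S then k i else 0) \<otimes>\<^bsub>monoid_ring S\<^esub> basis_elt (s i))"
        using sc_mult_basis[OF M, of "s i" "k i"] sA i by (simp add: Hs_Suc)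
      also have "\<dots> \<in> J"
        using Suc.IH Suc.prems s i sc_carrier[OF M] by (intro J.a_closed J.I_l_closed) auto
      finally show ?case .
    qed
    let ?g = "\<lambda>x. (\<Sum>j<n. if s j = x then k j else 0) - basis_elt b x"
    have "?g \<in> sum_relations S" using n sA b unfolding sum_relations_def by blast
    hence gJ: "?g \<in> J" using sumrel_sub relJ by blast
    have gC: "?g \<in> carrier (monoid_ring S)" using gJ J.a_subset by blast
    have "Hs n k s \<oplus>\<^bsub>monoid_ring S\<^esub> (\<ominus>\<^bsub>monoid_ring S\<^esub> ?g) \<in> J"
      using H[of n] gJ by (intro J.a_closed J.a_inv_closed) auto
    moreover have "Hs n k s \<oplus>\<^bsub>monoid_ring S\<^esub> (\<ominus>\<^bsub>monoid_ring S\<^esub> ?g) = basis_elt b"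
      by (simp add: ZA_a_inv[OF M gC] Hs_def)
    ultimately show "b \<in> {a \<in> s_carrier S. basis_elt a \<in> J}" using bA by simp
  qed
qed


lemma psi_mult:
  assumes f: "f \<in> carrier (monoid_ring S)" and g: "g \<in> carrier (monoid_ring S)"
  shows "psi \<phi> (f \<otimes>\<^bsub>monoid_ring S\<^esub> g) = psi \<phi> f * psi \<phi> g"
proof -
  let ?U = "(\<lambda>(x,y). s_mult S x y) ` (supp f \<times> supp g)"
  have fU: "finite ?U" by (intro finite_imageI finite_cartesian_product fin_supp[OF f] fin_supp[OF g])
  have sU: "supp (f \<otimes>\<^bsub>monoid_ring S\<^esub> g) \<subseteq> ?U"
    using ZA_mult_supp fin_supp f g by blast
  have "psi \<phi> (f \<otimes>\<^bsub>monoid_ring S\<^esub> g) = (\<Sum>c\<in>?U. of_int ((f \<otimes>\<^bsub>monoid_ring S\<^esub> g) c) * \<phi> c)"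
    by (rule psi_eq[OF fU sU])
  also have "\<dots> = (\<Sum>c\<in>?U. \<Sum>x\<in>supp f. \<Sum>y\<in>supp g. if s_mult S x y = c then of_int (f x * g y) * \<phi> c else 0)"
  proof (rule sum.cong[OF refl])
    fix c
    have e: "(f \<otimes>\<^bsub>monoid_ring S\<^esub> g) c = (\<Sum>x\<in>supp f. \<Sum>y\<in>supp g. if s_mult S x y = c then f x * g y else 0)"
      by (rule ZA_mult_eq[OF fin_supp[OF f] subset_refl fin_supp[OF g] subset_refl])
    show "of_int ((f \<otimes>\<^bsub>monoid_ring S\<^esub> g) c) * \<phi> c = (\<Sum>x\<in>supp f. \<Sum>y\<in>supp g. if s_mult S x y = c then of_int (f x * g y) * \<phi> c else 0)"
      unfolding e by (simp add: of_int_sum sum_distrib_right) (intro sum.cong refl; simp)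
  qed
  also have "\<dots> = (\<Sum>x\<in>supp f. \<Sum>y\<in>supp g. \<Sum>c\<in>?U. if s_mult S x y = c then of_int (f x * g y) * \<phi> c else 0)"
    by (rule swap3g)
  also have "\<dots> = (\<Sum>x\<in>supp f. \<Sum>y\<in>supp g. (of_int (f x) * \<phi> x) * (of_int (g y) * \<phi> y))"
  proof (intro sum.cong refl)
    fix x y assume x: "x \<in> supp f" and y: "y \<in> supp g"
    hence mU: "s_mult S x y \<in> ?U" by auto
    have xA: "x \<in> s_carrier S" using x supp_sub[OF f] by blast
    have yA: "y \<in> s_carrier S" using y supp_sub[OF g] by blast
    have "(\<Sum>c\<in>?U. if s_mult S x y = c then of_int (f x * g y) * \<phi> c else 0) = of_int (f x * g y) * \<phi> (s_mult S x y)"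
      using fU mU by (simp add: sum.delta')
    also have "\<dots> = (of_int (f x) * \<phi> x) * (of_int (g y) * \<phi> y)"
      by (simp add: phi_mult[OF xA yA] ac_simps)
    finally show "(\<Sum>c\<in>?U. if s_mult S x y = c then of_int (f x * g y) * \<phi> c else 0) = (of_int (f x) * \<phi> x) * (of_int (g y) * \<phi> y)" .
  qed
  also have "\<dots> = psi \<phi> f * psi \<phi> g"
    unfolding psi_def by (simp add: sum_product)
  finally show ?thesis .
qed

lemma K_ideal: "ideal {f \<in> carrier (monoid_ring S). psi \<phi> f = 0} (monoid_ring S)"
proof -
  interpret R: cring "monoid_ring S" by (rule ZA_cring[OF M])
  show ?thesis
  proof (rule idealI)
    show "ring (monoid_ring S)" using ZA_cring[OF M] by (simp add: cring_def)
    show "subgroup {f \<in> carrier (monoid_ring S). psi \<phi> f = 0} (add_monoid (monoid_ring S))"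
    proof (rule R.add.subgroupI)
      show "{f \<in> carrier (monoid_ring S). psi \<phi> f = 0} \<subseteq> carrier (monoid_ring S)" by auto
      show "{f \<in> carrier (monoid_ring S). psi \<phi> f = 0} \<noteq> {}"
        using R.zero_closed by (auto simp: psi_def supp_def)
      fix a assume a: "a \<in> {f \<in> carrier (monoid_ring S). psi \<phi> f = 0}"
      have "psi \<phi> (\<lambda>x. - a x) = - psi \<phi> a" by (simp add: psi_def supp_def sum_negf)
      thus "\<ominus>\<^bsub>monoid_ring S\<^esub> a \<in> {f \<in> carrier (monoid_ring S). psi \<phi> f = 0}"
        using a ZA_a_inv[OF M, of a] R.a_inv_closed[of a] by simp
      fix b assume b: "b \<in> {f \<in> carrier (monoid_ring S). psi \<phi> f = 0}"
      show "a \<oplus>\<^bsub>monoid_ring S\<^esub> b \<in> {f \<in> carrier (monoid_ring S). psi \<phi> f = 0}"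
        using a b psi_add[OF fin_supp fin_supp, of a S b S \<phi>] ZA_add_closed[OF M, of a b] by simp
    qed
  next
    fix a x assume a: "a \<in> {f \<in> carrier (monoid_ring S). psi \<phi> f = 0}" and x: "x \<in> carrier (monoid_ring S)"
    show "x \<otimes>\<^bsub>monoid_ring S\<^esub> a \<in> {f \<in> carrier (monoid_ring S). psi \<phi> f = 0}"
      using a x psi_mult[of x a] by simp
    show "a \<otimes>\<^bsub>monoid_ring S\<^esub> x \<in> {f \<in> carrier (monoid_ring S). psi \<phi> f = 0}"
      using a x psi_mult[of a x] by simp
  qed
qed

lemma rel_psi: "r \<in> rel_ideal S \<Longrightarrow> psi \<phi> r = 0"
proof -
  interpret R: cring "monoid_ring S" by (rule ZA_cring[OF M])
  have "sum_relations S \<subseteq> {f \<in> carrier (monoid_ring S). psi \<phi> f = 0}"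
  proof
    fix g assume gs: "g \<in> sum_relations S"
    then obtain n k a b where g: "g = (\<lambda>x. (\<Sum>j<n. if a j = x then k j else 0) - basis_elt b x)"
      and n: "2 \<le> n" and a: "\<forall>j<n. a j \<in> s_carrier S" and b: "s_sum S n k a = Some b"
      unfolding sum_relations_def by blast
    have bA: "\<phi> b = (\<Sum>j<n. of_int (k j) * \<phi> (a j))" using V_sum[OF n a, of k] b by simp
    have g': "g = (\<lambda>x. Hs n k a x + (if x = b then -1 else 0))" using g by (auto simp: Hs_def basis_elt_def)
    have f1: "finite (supp (Hs n k a))" by (rule finite_subset[OF supp_Hs]) simp
    have f2: "finite (supp (\<lambda>x. if x = b then (-1::int) else 0))"
      by (rule finite_subset[of _ "{b}"]) (auto simp: supp_def)
    have "psi \<phi> g = 0" unfolding g' psi_add[OF f1 f2] psi_single psi_Hs bA by simp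
    thus "g \<in> {f \<in> carrier (monoid_ring S). psi \<phi> f = 0}" using gs sumrel_carrier by auto
  qed
  hence "rel_ideal S \<subseteq> {f \<in> carrier (monoid_ring S). psi \<phi> f = 0}"
    unfolding rel_ideal_def by (rule R.genideal_minimal[OF K_ideal])
  thus "r \<in> rel_ideal S \<Longrightarrow> psi \<phi> r = 0" by auto
qed


lemma L_ideal:
  assumes sub: "\<aa> \<subseteq> s_carrier S" and mul: "\<forall>x\<in>\<aa>. \<forall>y\<in>s_carrier S. s_mult S x y \<in> \<aa>"
  shows "ideal {f \<in> carrier (monoid_ring S). \<forall>x. x \<notin> \<aa> \<longrightarrow> f x = 0} (monoid_ring S)"
proof -
  interpret R: cring "monoid_ring S" by (rule ZA_cring[OF M])
  let ?L = "{f \<in> carrier (monoid_ring S). \<forall>x. x \<notin> \<aa> \<longrightarrow> f x = 0}"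
  show ?thesis
  proof (rule idealI)
    show "ring (monoid_ring S)" using ZA_cring[OF M] by (simp add: cring_def)
    show "subgroup ?L (add_monoid (monoid_ring S))"
    proof (rule R.add.subgroupI)
      show "?L \<subseteq> carrier (monoid_ring S)" by auto
      show "?L \<noteq> {}" using R.zero_closed by auto
      fix a assume a: "a \<in> ?L"
      thus "\<ominus>\<^bsub>monoid_ring S\<^esub> a \<in> ?L"
        using ZA_a_inv[OF M, of a] R.a_inv_closed[of a] by simp
      fix b assume b: "b \<in> ?L"
      show "a \<oplus>\<^bsub>monoid_ring S\<^esub> b \<in> ?L"
        using a b ZA_add_closed[OF M, of a b] by simp
    qed
  next
    fix a x assume a: "a \<in> ?L" and x: "x \<in> carrier (monoid_ring S)"
    have aC: "a \<in> carrier (monoid_ring S)" using a by simp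
    have sa: "supp a \<subseteq> \<aa>" using a by (auto simp: supp_def)
    show "x \<otimes>\<^bsub>monoid_ring S\<^esub> a \<in> ?L"
    proof (simp add: ZA_m_closed[OF M x aC], intro allI impI)
      fix c assume c: "c \<notin> \<aa>"
      show "(x \<otimes>\<^bsub>monoid_ring S\<^esub> a) c = 0"
      proof (rule ccontr)
        assume "(x \<otimes>\<^bsub>monoid_ring S\<^esub> a) c \<noteq> 0"
        hence "c \<in> (\<lambda>(u,v). s_mult S u v) ` (supp x \<times> supp a)"
          using ZA_mult_supp[OF fin_supp[OF x] fin_supp[OF aC], of S] by (auto simp: supp_def)
        then obtain u v where uv: "u \<in> supp x" "v \<in> supp a" "c = s_mult S u v" by auto
        have uA: "u \<in> s_carrier S" using uv supp_sub[OF x] by blast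
        have "s_mult S u v = s_mult S v u" using m_comm[OF M uA] uv sa sub by blast
        thus False using mul uv sa uA c by auto
      qed
    qed
    show "a \<otimes>\<^bsub>monoid_ring S\<^esub> x \<in> ?L"
    proof (simp add: ZA_m_closed[OF M aC x], intro allI impI)
      fix c assume c: "c \<notin> \<aa>"
      show "(a \<otimes>\<^bsub>monoid_ring S\<^esub> x) c = 0"
      proof (rule ccontr)
        assume "(a \<otimes>\<^bsub>monoid_ring S\<^esub> x) c \<noteq> 0"
        hence "c \<in> (\<lambda>(u,v). s_mult S u v) ` (supp a \<times> supp x)"
          using ZA_mult_supp[OF fin_supp[OF aC] fin_supp[OF x], of S] by (auto simp: supp_def)
        then obtain u v where uv: "u \<in> supp a" "v \<in> supp x" "c = s_mult S u v" by auto
        have vA: "v \<in> s_carrier S" using uv supp_sub[OF x] by blast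
        thus False using mul uv sa c by auto
      qed
    qed
  qed
qed

lemma recover:
  assumes closed: "closed_under_sums S \<aa>" and ne: "\<aa> \<noteq> {}" and sub: "\<aa> \<subseteq> s_carrier S"
    and a: "a \<in> s_carrier S" and l: "l \<in> carrier (monoid_ring S)" and la: "\<forall>x. x \<notin> \<aa> \<longrightarrow> l x = 0"
    and r: "r \<in> rel_ideal S" and eq: "basis_elt a = (\<lambda>x. l x + r x)"
  shows "a \<in> \<aa>"
proof -
  interpret rel: ideal "rel_ideal S" "monoid_ring S" by (rule rel_ideal_ideal)
  have rC: "r \<in> carrier (monoid_ring S)" using r rel.Icarr by blast
  have "\<phi> a = psi \<phi> (basis_elt a)" using psi_single[of \<phi> a 1] by (simp add: basis_elt_def)
  also have "\<dots> = psi \<phi> l + psi \<phi> r" unfolding eq by (rule psi_add[OF fin_supp[OF l] fin_supp[OF rC]])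
  also have "\<dots> = psi \<phi> l" using rel_psi[OF r] by simp
  finally have pa: "\<phi> a = psi \<phi> l" .
  let ?F = "supp l"
  have fF: "finite ?F" by (rule fin_supp[OF l])
  have Fa: "?F \<subseteq> \<aa>" using la by (auto simp: supp_def)
  obtain h where h: "bij_betw h {0..<card ?F} ?F" using ex_bij_betw_nat_finite[OF fF] by blast
  obtain s0 where s0: "s0 \<in> \<aa>" using ne by blast
  define N where "N = card ?F"
  define aa where "aa j = (if j < N then h j else s0)" for j
  define kk where "kk j = (if j < N then l (h j) else 0)" for j
  have hF: "h j \<in> ?F" if "j < N" for j using h that unfolding N_def bij_betw_def by auto
  have aa_in: "\<forall>j<N+2. aa j \<in> \<aa>" using hF Fa s0 by (auto simp: aa_def)
  hence aaA: "\<forall>j<N+2. aa j \<in> s_carrier S" using sub by blast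
  have "(\<Sum>j<N+2. of_int (kk j) * \<phi> (aa j)) = (\<Sum>j<N. of_int (kk j) * \<phi> (aa j))"
    by (rule sum.mono_neutral_right) (auto simp: kk_def)
  also have "\<dots> = (\<Sum>j\<in>{0..<N}. of_int (l (h j)) * \<phi> (h j))"
    by (rule sum.cong) (auto simp: kk_def aa_def)
  also have "\<dots> = (\<Sum>x\<in>?F. of_int (l x) * \<phi> x)"
    using h unfolding N_def by (rule sum.reindex_bij_betw)
  also have "\<dots> = \<phi> a" using pa by (simp add: psi_def)
  finally have sumeq: "(\<Sum>j<N+2. of_int (kk j) * \<phi> (aa j)) = \<phi> a" .
  have two: "2 \<le> N + 2" by simp
  show ?thesis
  proof (cases "s_sum S (N+2) kk aa")
    case None
    thus ?thesis using V_sum[OF two aaA, of kk] sumeq a by simp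
  next
    case (Some b)
    hence "b \<in> s_carrier S" "\<phi> b = \<phi> a" using V_sum[OF two aaA, of kk] sumeq by auto
    hence "b = a" using phi_inj a by (auto dest: inj_onD)
    moreover have "b \<in> \<aa>" using closed two aa_in Some unfolding closed_under_sums_def by blast
    ultimately show ?thesis by simp
  qed
qed

end

theorem mainTheorem4:
  fixes S :: "'a sesquiad" and \<phi> :: "'a \<Rightarrow> 'r::comm_ring_1" and \<aa> :: "'a set"
  assumes "sesquiad_via S \<phi>"
    and "\<aa> \<subseteq> s_carrier S"
    and "\<aa> \<noteq> {}"
  shows "(\<exists>I. ideal I (universal_ring S) \<and> \<aa> = {a \<in> s_carrier S. univ_map S a \<in> I})
     \<longleftrightarrow> (closed_under_sums S \<aa> \<and>
          (\<forall>x\<in>\<aa>. \<forall>y\<in>s_carrier S. s_mult S x y \<in> \<aa>))"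
proof -
  note V = assms(1)
  note M = M[OF V]
  interpret R: cring "monoid_ring S" by (rule ZA_cring[OF M])
  have relI: "ideal (rel_ideal S) (monoid_ring S)" by (rule rel_ideal_ideal[OF V])
  show ?thesis
  proof
    assume "\<exists>I. ideal I (universal_ring S) \<and> \<aa> = {a \<in> s_carrier S. univ_map S a \<in> I}"
    then obtain I where I: "ideal I (monoid_ring S Quot rel_ideal S)"
      and aI: "\<aa> = {a \<in> s_carrier S. univ_map S a \<in> I}" unfolding universal_ring_def by blast
    let ?J = "{r \<in> carrier (monoid_ring S). rel_ideal S +>\<^bsub>monoid_ring S\<^esub> r \<in> I}"
    have J: "ideal ?J (monoid_ring S)"
      by (rule ring_hom_ring.ideal_vimage[OF ideal.rcos_ring_hom_ring[OF relI] I])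
    have relJ: "rel_ideal S \<subseteq> ?J"
    proof
      fix r assume r: "r \<in> rel_ideal S"
      have rC: "r \<in> carrier (monoid_ring S)" using r ideal.Icarr[OF relI] by blast
      have "rel_ideal S +>\<^bsub>monoid_ring S\<^esub> r = rel_ideal S"
        using abelian_subgroupI3[OF ideal.axioms(1)[OF relI] R.is_abelian_group]
        by (simp add: r abelian_subgroup.a_rcos_const)
      moreover have "\<zero>\<^bsub>monoid_ring S Quot rel_ideal S\<^esub> \<in> I"
        by (rule additive_subgroup.zero_closed[OF ideal.axioms(1)[OF I]])
      ultimately show "r \<in> ?J" using rC by (simp add: FactRing_def)
    qed
    have "\<aa> = {a \<in> s_carrier S. basis_elt a \<in> ?J}"
      unfolding aI univ_map_def using basis_carrier[OF M] by auto
    thus "closed_under_sums S \<aa> \<and> (\<forall>x\<in>\<aa>. \<forall>y\<in>s_carrier S. s_mult S x y \<in> \<aa>)"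
      using KL[OF V J relJ] by simp
  next
    assume "closed_under_sums S \<aa> \<and> (\<forall>x\<in>\<aa>. \<forall>y\<in>s_carrier S. s_mult S x y \<in> \<aa>)"
    hence closed: "closed_under_sums S \<aa>" and mul: "\<forall>x\<in>\<aa>. \<forall>y\<in>s_carrier S. s_mult S x y \<in> \<aa>" by auto
    let ?L = "{f \<in> carrier (monoid_ring S). \<forall>x. x \<notin> \<aa> \<longrightarrow> f x = 0}"
    have LI: "ideal ?L (monoid_ring S)" by (rule L_ideal[OF V assms(2) mul])
    let ?J = "?L <+>\<^bsub>monoid_ring S\<^esub> rel_ideal S"
    have JI: "ideal ?J (monoid_ring S)" by (rule R.add_ideals[OF LI relI])
    let ?I = "(\<lambda>j. rel_ideal S +>\<^bsub>monoid_ring S\<^esub> j) ` ?J"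
    have II: "ideal ?I (monoid_ring S Quot rel_ideal S)"
      by (rule R.ring_ideal_imp_quot_ideal[OF relI JI])
    have relJ: "rel_ideal S \<subseteq> ?J"
    proof
      fix r assume r: "r \<in> rel_ideal S"
      have "\<zero>\<^bsub>monoid_ring S\<^esub> \<in> ?L" using R.zero_closed by auto
      moreover have "r = \<zero>\<^bsub>monoid_ring S\<^esub> \<oplus>\<^bsub>monoid_ring S\<^esub> r" by simp
      ultimately show "r \<in> ?J" using r unfolding set_add_def' by blast
    qed
    have UI: "\<Union> ?I = ?J"
      using R.ideal_incl_iff[OF relI JI] relJ by simp
    have Isub: "?I \<subseteq> carrier (monoid_ring S Quot rel_ideal S)"
      by (rule additive_subgroup.a_subset[OF ideal.axioms(1)[OF II]])
    have mem: "univ_map S a \<in> ?I \<longleftrightarrow> basis_elt a \<in> ?J" if "a \<in> s_carrier S" for a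
      using R.canonical_proj_vimage_mem_iff[OF relI Isub basis_carrier[OF M that]] UI
      unfolding univ_map_def by simp
    have "\<aa> = {a \<in> s_carrier S. univ_map S a \<in> ?I}"
    proof (rule equalityI; rule subsetI)
      fix a assume a: "a \<in> \<aa>"
      hence aA: "a \<in> s_carrier S" using assms(2) by blast
      have "basis_elt a \<in> ?L" using a basis_carrier[OF M aA] by (auto simp: basis_elt_def)
      moreover have "basis_elt a = basis_elt a \<oplus>\<^bsub>monoid_ring S\<^esub> \<zero>\<^bsub>monoid_ring S\<^esub>" by simp
      moreover have "\<zero>\<^bsub>monoid_ring S\<^esub> \<in> rel_ideal S"
        by (rule additive_subgroup.zero_closed[OF ideal.axioms(1)[OF relI]])
      ultimately have "basis_elt a \<in> ?J" unfolding set_add_def' by blast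
      thus "a \<in> {a \<in> s_carrier S. univ_map S a \<in> ?I}" using mem[OF aA] aA by simp
    next
      fix a assume "a \<in> {a \<in> s_carrier S. univ_map S a \<in> ?I}"
      hence aA: "a \<in> s_carrier S" and "basis_elt a \<in> ?J" using mem by auto
      then obtain l r where l: "l \<in> ?L" and r: "r \<in> rel_ideal S"
        and eq: "basis_elt a = l \<oplus>\<^bsub>monoid_ring S\<^esub> r" unfolding set_add_def' by blast
      show "a \<in> \<aa>"
        by (rule recover[OF V closed assms(3) assms(2) aA _ _ r]) (use l eq in auto)
    qed
    thus "\<exists>I. ideal I (universal_ring S) \<and> \<aa> = {a \<in> s_carrier S. univ_map S a \<in> I}"
      using II unfolding universal_ring_def by blast
  qed
qed

end
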